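(* If $\dot G\in\mathcal C_1\cup\mathcal C_4\cup\mathcal C_5$ is a connected, non-complete, $5$-regular and $1$ net-regular SRSG with parameters $(n,5,a,b,c)$, then $(a,b)\neq(0,1)$.
   Context: A signed graph $\dot G=(G,\sigma)$ is a simple graph $G$ with $\sigma:E(G)\to\{\pm1\}$; adjacency matrix $A_{\dot G}$ has entries $\sigma(v_iv_j)$ for adjacent vertices and $0$ otherwise. Degree and connectedness refer to $G$; net-degree is $d^+(v)-d^-(v)$; $\rho$ net-regular means all net-degrees equal $\rho$. $\dot G$ on $n$ vertices is an SRSG if it is neither homogeneous complete nor edgeless and there are $r\in\mathbb N$, $a,b,c\in\mathbb Z$ with $(A^2_{\dot G})_{ii}=r$, $(A^2_{\dot G})_{ij}=a$ for positive edges, $b$ for negative edges, $c$ for distinct non-adjacent pairs; parameters $(n,r,a,b,c)$. Classes: $\mathcal C_1$: $a=-b$ and (complete, or non-complete with $c\neq0$); $\mathcal C_4$: $a\ne-b$, non-complete, $c=0$; $\mathcal C_5$: $a\neq-b$, non-complete, $c\notin\{0,\frac{a+b}{2}\}$. *)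

theory Defs
  imports Complex_Main
begin

definition signed_graph :: "'a set \<Rightarrow> ('a \<Rightarrow> 'a \<Rightarrow> bool) \<Rightarrow> ('a \<Rightarrow> 'a \<Rightarrow> int) \<Rightarrow> bool" where
  "signed_graph V E \<sigma> \<longleftrightarrow> finite V
     \<and> (\<forall>u v. E u v \<longrightarrow> u \<in> V \<and> v \<in> V)
     \<and> (\<forall>u. \<not> E u u)
     \<and> (\<forall>u v. E u v \<longrightarrow> E v u)
     \<and> (\<forall>u v. E u v \<longrightarrow> \<sigma> u v = \<sigma> v u)
     \<and> (\<forall>u v. E u v \<longrightarrow> \<sigma> u v = 1 \<or> \<sigma> u v = -1)"

definition adj :: "('a \<Rightarrow> 'a \<Rightarrow> bool) \<Rightarrow> ('a \<Rightarrow> 'a \<Rightarrow> int) \<Rightarrow> 'a \<Rightarrow> 'a \<Rightarrow> int" where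
  "adj E \<sigma> u v = (if E u v then \<sigma> u v else 0)"

definition adj_sq :: "'a set \<Rightarrow> ('a \<Rightarrow> 'a \<Rightarrow> bool) \<Rightarrow> ('a \<Rightarrow> 'a \<Rightarrow> int) \<Rightarrow> 'a \<Rightarrow> 'a \<Rightarrow> int" where
  "adj_sq V E \<sigma> u v = (\<Sum>w\<in>V. adj E \<sigma> u w * adj E \<sigma> w v)"

definition complete_graph :: "'a set \<Rightarrow> ('a \<Rightarrow> 'a \<Rightarrow> bool) \<Rightarrow> bool" where
  "complete_graph V E \<longleftrightarrow> (\<forall>u\<in>V. \<forall>v\<in>V. u \<noteq> v \<longrightarrow> E u v)"

definition homogeneous_complete :: "'a set \<Rightarrow> ('a \<Rightarrow> 'a \<Rightarrow> bool) \<Rightarrow> ('a \<Rightarrow> 'a \<Rightarrow> int) \<Rightarrow> bool" where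
  "homogeneous_complete V E \<sigma> \<longleftrightarrow> complete_graph V E \<and>
     ((\<forall>u v. E u v \<longrightarrow> \<sigma> u v = 1) \<or> (\<forall>u v. E u v \<longrightarrow> \<sigma> u v = -1))"

definition edgeless :: "'a set \<Rightarrow> ('a \<Rightarrow> 'a \<Rightarrow> bool) \<Rightarrow> bool" where
  "edgeless V E \<longleftrightarrow> (\<forall>u v. \<not> E u v)"

definition connected_graph :: "'a set \<Rightarrow> ('a \<Rightarrow> 'a \<Rightarrow> bool) \<Rightarrow> bool" where
  "connected_graph V E \<longleftrightarrow> (\<forall>u\<in>V. \<forall>v\<in>V. E\<^sup>*\<^sup>* u v)"

definition degree :: "'a set \<Rightarrow> ('a \<Rightarrow> 'a \<Rightarrow> bool) \<Rightarrow> 'a \<Rightarrow> nat" where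
  "degree V E v = card {w\<in>V. E v w}"

definition pos_degree :: "'a set \<Rightarrow> ('a \<Rightarrow> 'a \<Rightarrow> bool) \<Rightarrow> ('a \<Rightarrow> 'a \<Rightarrow> int) \<Rightarrow> 'a \<Rightarrow> nat" where
  "pos_degree V E \<sigma> v = card {w\<in>V. E v w \<and> \<sigma> v w = 1}"

definition neg_degree :: "'a set \<Rightarrow> ('a \<Rightarrow> 'a \<Rightarrow> bool) \<Rightarrow> ('a \<Rightarrow> 'a \<Rightarrow> int) \<Rightarrow> 'a \<Rightarrow> nat" where
  "neg_degree V E \<sigma> v = card {w\<in>V. E v w \<and> \<sigma> v w = -1}"

definition regular :: "'a set \<Rightarrow> ('a \<Rightarrow> 'a \<Rightarrow> bool) \<Rightarrow> nat \<Rightarrow> bool" where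
  "regular V E k \<longleftrightarrow> (\<forall>v\<in>V. degree V E v = k)"

definition net_regular :: "'a set \<Rightarrow> ('a \<Rightarrow> 'a \<Rightarrow> bool) \<Rightarrow> ('a \<Rightarrow> 'a \<Rightarrow> int) \<Rightarrow> int \<Rightarrow> bool" where
  "net_regular V E \<sigma> \<rho> \<longleftrightarrow>
     (\<forall>v\<in>V. int (pos_degree V E \<sigma> v) - int (neg_degree V E \<sigma> v) = \<rho>)"

definition srsg :: "'a set \<Rightarrow> ('a \<Rightarrow> 'a \<Rightarrow> bool) \<Rightarrow> ('a \<Rightarrow> 'a \<Rightarrow> int)
     \<Rightarrow> nat \<Rightarrow> nat \<Rightarrow> int \<Rightarrow> int \<Rightarrow> int \<Rightarrow> bool" where
  "srsg V E \<sigma> n r a b c \<longleftrightarrow> signed_graph V E \<sigma>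
     \<and> \<not> homogeneous_complete V E \<sigma> \<and> \<not> edgeless V E
     \<and> n = card V
     \<and> (\<forall>i\<in>V. adj_sq V E \<sigma> i i = int r)
     \<and> (\<forall>i\<in>V. \<forall>j\<in>V. E i j \<and> \<sigma> i j = 1 \<longrightarrow> adj_sq V E \<sigma> i j = a)
     \<and> (\<forall>i\<in>V. \<forall>j\<in>V. E i j \<and> \<sigma> i j = -1 \<longrightarrow> adj_sq V E \<sigma> i j = b)
     \<and> (\<forall>i\<in>V. \<forall>j\<in>V. i \<noteq> j \<and> \<not> E i j \<longrightarrow> adj_sq V E \<sigma> i j = c)"

definition class_C1 :: "'a set \<Rightarrow> ('a \<Rightarrow> 'a \<Rightarrow> bool) \<Rightarrow> int \<Rightarrow> int \<Rightarrow> int \<Rightarrow> bool" where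
  "class_C1 V E a b c \<longleftrightarrow> a = -b \<and>
     (complete_graph V E \<or> (\<not> complete_graph V E \<and> c \<noteq> 0))"

definition class_C4 :: "'a set \<Rightarrow> ('a \<Rightarrow> 'a \<Rightarrow> bool) \<Rightarrow> int \<Rightarrow> int \<Rightarrow> int \<Rightarrow> bool" where
  "class_C4 V E a b c \<longleftrightarrow> a \<noteq> -b \<and> \<not> complete_graph V E \<and> c = 0"

definition class_C5 :: "'a set \<Rightarrow> ('a \<Rightarrow> 'a \<Rightarrow> bool) \<Rightarrow> int \<Rightarrow> int \<Rightarrow> int \<Rightarrow> bool" where
  "class_C5 V E a b c \<longleftrightarrow> a \<noteq> -b \<and> \<not> complete_graph V E
     \<and> real_of_int c \<noteq> 0 \<and> real_of_int c \<noteq> real_of_int (a + b) / 2"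

end

theory Submission imports Defs begin

locale S =
  fixes V :: "'a set" and E :: "'a \<Rightarrow> 'a \<Rightarrow> bool" and \<sigma> :: "'a \<Rightarrow> 'a \<Rightarrow> int" and c :: int
  assumes fin: "finite V"
    and inV: "\<And>u v. E u v \<Longrightarrow> u \<in> V \<and> v \<in> V"
    and irr: "\<And>u. \<not> E u u"
    and sym: "\<And>u v. E u v \<Longrightarrow> E v u"
    and ssym: "\<And>u v. E u v \<Longrightarrow> \<sigma> u v = \<sigma> v u"
    and spm: "\<And>u v. E u v \<Longrightarrow> \<sigma> u v = 1 \<or> \<sigma> u v = -1"
    and dP: "\<And>v. v \<in> V \<Longrightarrow> card {w\<in>V. E v w \<and> \<sigma> v w = 1} = 3"
    and dM: "\<And>v. v \<in> V \<Longrightarrow> card {w\<in>V. E v w \<and> \<sigma> v w = -1} = 2"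
    and sq: "\<And>i j. i \<in> V \<Longrightarrow> j \<in> V \<Longrightarrow> adj_sq V E \<sigma> i j =
        (if i = j then 5 else if E i j then (if \<sigma> i j = 1 then 0 else 1) else c)"
    and nonadj: "\<exists>i\<in>V. \<exists>j\<in>V. i \<noteq> j \<and> \<not> E i j"
begin

definition Pos where "Pos x y \<longleftrightarrow> E x y \<and> \<sigma> x y = 1"
definition Neg where "Neg x y \<longleftrightarrow> E x y \<and> \<sigma> x y = -1"

lemma PosE: "Pos x y \<Longrightarrow> E x y" and NegE: "Neg x y \<Longrightarrow> E x y"
  by (auto simp: Pos_def Neg_def)
lemma Esplit: "E x y \<longleftrightarrow> Pos x y \<or> Neg x y"
  using spm by (auto simp: Pos_def Neg_def)
lemma PN: "Pos x y \<Longrightarrow> \<not> Neg x y" by (auto simp: Pos_def Neg_def)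
lemma Psym: "Pos x y \<Longrightarrow> Pos y x" using sym ssym by (auto simp: Pos_def)
lemma Nsym: "Neg x y \<Longrightarrow> Neg y x" using sym ssym by (auto simp: Neg_def)
lemma PV: "Pos x y \<Longrightarrow> x \<in> V \<and> y \<in> V" using inV by (auto simp: Pos_def)
lemma NV: "Neg x y \<Longrightarrow> x \<in> V \<and> y \<in> V" using inV by (auto simp: Neg_def)
lemma Pirr: "\<not> Pos x x" using irr by (auto simp: Pos_def)
lemma Nirr: "\<not> Neg x x" using irr by (auto simp: Neg_def)

abbreviation ob :: "bool \<Rightarrow> int" where "ob \<equiv> of_bool"

definition cnt where "cnt R T x y = (\<Sum>w\<in>V. ob (R x w \<and> T w y))"

lemma adj_eq: "adj E \<sigma> x y = ob (Pos x y) - ob (Neg x y)"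
  using spm by (auto simp: adj_def Pos_def Neg_def)

lemma sq_eq: "adj_sq V E \<sigma> x y = cnt Pos Pos x y + cnt Neg Neg x y - cnt Pos Neg x y - cnt Neg Pos x y"
proof -
  have "adj E \<sigma> x w * adj E \<sigma> w y = ob (Pos x w \<and> Pos w y) + ob (Neg x w \<and> Neg w y)
     - ob (Pos x w \<and> Neg w y) - ob (Neg x w \<and> Pos w y)" for w
    unfolding adj_eq using PN by (auto)
  then show ?thesis unfolding adj_sq_def cnt_def by (simp add: sum.distrib sum_subtractf)
qed

lemma rowP: "x \<in> V \<Longrightarrow> (\<Sum>w\<in>V. ob (Pos x w)) = 3"
  using dP[of x] fin by (simp add: Pos_def Int_def Collect_conj_eq[symmetric])


lemma rowM: "x \<in> V \<Longrightarrow> (\<Sum>w\<in>V. ob (Neg x w)) = 2"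
  using dM[of x] fin by (simp add: Neg_def Int_def Collect_conj_eq[symmetric])

lemma rowA: "x \<in> V \<Longrightarrow> (\<Sum>w\<in>V. adj E \<sigma> x w) = 1"
  using rowP[of x] rowM[of x] by (simp add: adj_eq sum_subtractf)

lemma adj_sym: "adj E \<sigma> x y = adj E \<sigma> y x"
  using sym ssym by (auto simp: adj_def)

lemma colA: "y \<in> V \<Longrightarrow> (\<Sum>w\<in>V. adj E \<sigma> w y) = 1"
  using rowA[of y] by (simp add: adj_sym)

lemma sqf: "w \<in> V \<Longrightarrow> y \<in> V \<Longrightarrow> adj_sq V E \<sigma> w y =
   (5 - c) * ob (w = y) - c * ob (Pos w y) + (1 - c) * ob (Neg w y) + c"
  using sq[of w y] irr spm by (auto simp: Pos_def Neg_def)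

lemma rowI: "x \<in> V \<Longrightarrow> (\<Sum>w\<in>V. ob (x = w)) = 1"
  using fin by simp

lemma rowSq: "x \<in> V \<Longrightarrow> (\<Sum>y\<in>V. adj_sq V E \<sigma> x y) = 1"
proof -
  assume x: "x \<in> V"
  have "(\<Sum>y\<in>V. adj_sq V E \<sigma> x y) = (\<Sum>y\<in>V. \<Sum>w\<in>V. adj E \<sigma> x w * adj E \<sigma> w y)"
    unfolding adj_sq_def ..
  also have "\<dots> = (\<Sum>w\<in>V. \<Sum>y\<in>V. adj E \<sigma> x w * adj E \<sigma> w y)"
    by (rule sum.swap)
  also have "\<dots> = (\<Sum>w\<in>V. adj E \<sigma> x w * (\<Sum>y\<in>V. adj E \<sigma> w y))"
    by (simp add: sum_distrib_left)
  also have "\<dots> = (\<Sum>w\<in>V. adj E \<sigma> x w)"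
    by (rule sum.cong) (auto simp: rowA)
  finally show ?thesis using rowA[OF x] by simp
qed

lemma key1: "c * (int (card V) - 6) = -6"
proof -
  obtain x where x: "x \<in> V" using nonadj by blast
  have "(\<Sum>y\<in>V. adj_sq V E \<sigma> x y) = (\<Sum>y\<in>V. (5 - c) * ob (x = y) - c * ob (Pos x y) + (1 - c) * ob (Neg x y) + c)"
    by (rule sum.cong) (auto simp: sqf x)
  also have "\<dots> = (5 - c) * (\<Sum>y\<in>V. ob (x = y)) - c * (\<Sum>y\<in>V. ob (Pos x y)) + (1 - c) * (\<Sum>y\<in>V. ob (Neg x y)) + c * int (card V)"
    by (simp add: sum.distrib sum_subtractf sum_distrib_left[symmetric] del: sum_of_bool_eq)
  also have "\<dots> = (5 - c) - 3 * c + 2 * (1 - c) + c * int (card V)"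
    using rowI[OF x] rowP[OF x] rowM[OF x] by simp
  finally show ?thesis using rowSq[OF x] by (simp add: algebra_simps)
qed


lemma triple: "(\<Sum>w\<in>V. adj E \<sigma> x w * adj_sq V E \<sigma> w y) = (\<Sum>w\<in>V. adj_sq V E \<sigma> x w * adj E \<sigma> w y)"
proof -
  have "(\<Sum>w\<in>V. adj E \<sigma> x w * adj_sq V E \<sigma> w y) = (\<Sum>w\<in>V. \<Sum>u\<in>V. adj E \<sigma> x w * adj E \<sigma> w u * adj E \<sigma> u y)"
    unfolding adj_sq_def by (simp add: sum_distrib_left mult.assoc)
  also have "\<dots> = (\<Sum>u\<in>V. \<Sum>w\<in>V. adj E \<sigma> x w * adj E \<sigma> w u * adj E \<sigma> u y)"
    by (rule sum.swap)
  also have "\<dots> = (\<Sum>u\<in>V. adj_sq V E \<sigma> x u * adj E \<sigma> u y)"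
    unfolding adj_sq_def by (simp add: sum_distrib_right)
  finally show ?thesis .
qed

lemma lm: "adj E \<sigma> x w * ob (R w y) = ob (Pos x w \<and> R w y) - ob (Neg x w \<and> R w y)"
  using PN by (auto simp: adj_eq)
lemma rm: "ob (R x w) * adj E \<sigma> w y = ob (R x w \<and> Pos w y) - ob (R x w \<and> Neg w y)"
  using PN by (auto simp: adj_eq)

lemma dl: "y \<in> V \<Longrightarrow> (\<Sum>w\<in>V. adj E \<sigma> x w * ob (w = y)) = adj E \<sigma> x y"
proof -
  assume y: "y \<in> V"
  have "(\<Sum>w\<in>V. adj E \<sigma> x w * ob (w = y)) = (\<Sum>w\<in>V. if w = y then adj E \<sigma> x w else 0)"
    by (rule sum.cong) auto
  also have "\<dots> = adj E \<sigma> x y" using fin y by (simp add: sum.delta')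
  finally show ?thesis .
qed
lemma dr: "x \<in> V \<Longrightarrow> (\<Sum>w\<in>V. ob (x = w) * adj E \<sigma> w y) = adj E \<sigma> x y"
proof -
  assume x: "x \<in> V"
  have "(\<Sum>w\<in>V. ob (x = w) * adj E \<sigma> w y) = (\<Sum>w\<in>V. if x = w then adj E \<sigma> w y else 0)"
    by (rule sum.cong) auto
  also have "\<dots> = adj E \<sigma> x y" using fin x by (simp add: sum.delta)
  finally show ?thesis .
qed

lemma comm: "x \<in> V \<Longrightarrow> y \<in> V \<Longrightarrow> cnt Pos Neg x y = cnt Neg Pos x y"
proof -
  assume x: "x \<in> V" and y: "y \<in> V"
  have "(\<Sum>w\<in>V. adj E \<sigma> x w * adj_sq V E \<sigma> w y) =
     (\<Sum>w\<in>V. (5 - c) * (adj E \<sigma> x w * ob (w = y)) - c * (adj E \<sigma> x w * ob (Pos w y))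
        + (1 - c) * (adj E \<sigma> x w * ob (Neg w y)) + c * adj E \<sigma> x w)"
    by (rule sum.cong) (auto simp: sqf y algebra_simps)
  also have "\<dots> = (5 - c) * (\<Sum>w\<in>V. adj E \<sigma> x w * ob (w = y)) - c * (\<Sum>w\<in>V. adj E \<sigma> x w * ob (Pos w y))
        + (1 - c) * (\<Sum>w\<in>V. adj E \<sigma> x w * ob (Neg w y)) + c * (\<Sum>w\<in>V. adj E \<sigma> x w)"
    by (simp only: sum.distrib sum_subtractf sum_distrib_left[symmetric])
  also have "\<dots> = (5 - c) * adj E \<sigma> x y - c * (cnt Pos Pos x y - cnt Neg Pos x y)
        + (1 - c) * (cnt Pos Neg x y - cnt Neg Neg x y) + c"
    proof -
    have a: "(\<Sum>w\<in>V. adj E \<sigma> x w * ob (Pos w y)) = cnt Pos Pos x y - cnt Neg Pos x y"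
      by (simp only: lm sum_subtractf cnt_def)
    have b: "(\<Sum>w\<in>V. adj E \<sigma> x w * ob (Neg w y)) = cnt Pos Neg x y - cnt Neg Neg x y"
      by (simp only: lm sum_subtractf cnt_def)
    show ?thesis by (simp only: a b rowA[OF x] dl[OF y])
  qed
  finally have L: "(\<Sum>w\<in>V. adj E \<sigma> x w * adj_sq V E \<sigma> w y) = (5 - c) * adj E \<sigma> x y - c * (cnt Pos Pos x y - cnt Neg Pos x y)
        + (1 - c) * (cnt Pos Neg x y - cnt Neg Neg x y) + c" .
  have "(\<Sum>w\<in>V. adj_sq V E \<sigma> x w * adj E \<sigma> w y) =
     (\<Sum>w\<in>V. (5 - c) * (ob (x = w) * adj E \<sigma> w y) - c * (ob (Pos x w) * adj E \<sigma> w y)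
        + (1 - c) * (ob (Neg x w) * adj E \<sigma> w y) + c * adj E \<sigma> w y)"
    by (rule sum.cong) (auto simp: sqf x algebra_simps)
  also have "\<dots> = (5 - c) * (\<Sum>w\<in>V. ob (x = w) * adj E \<sigma> w y) - c * (\<Sum>w\<in>V. ob (Pos x w) * adj E \<sigma> w y)
        + (1 - c) * (\<Sum>w\<in>V. ob (Neg x w) * adj E \<sigma> w y) + c * (\<Sum>w\<in>V. adj E \<sigma> w y)"
    by (simp only: sum.distrib sum_subtractf sum_distrib_left[symmetric])
  also have "\<dots> = (5 - c) * adj E \<sigma> x y - c * (cnt Pos Pos x y - cnt Pos Neg x y)
        + (1 - c) * (cnt Neg Pos x y - cnt Neg Neg x y) + c"
    proof -
    have a: "(\<Sum>w\<in>V. ob (Pos x w) * adj E \<sigma> w y) = cnt Pos Pos x y - cnt Pos Neg x y"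
      by (simp only: rm sum_subtractf cnt_def)
    have b: "(\<Sum>w\<in>V. ob (Neg x w) * adj E \<sigma> w y) = cnt Neg Pos x y - cnt Neg Neg x y"
      by (simp only: rm sum_subtractf cnt_def)
    show ?thesis by (simp only: a b colA[OF y] dr[OF x])
  qed
  finally have R: "(\<Sum>w\<in>V. adj_sq V E \<sigma> x w * adj E \<sigma> w y) = (5 - c) * adj E \<sigma> x y - c * (cnt Pos Pos x y - cnt Pos Neg x y)
        + (1 - c) * (cnt Neg Pos x y - cnt Neg Neg x y) + c" .
  from L R triple have "(1 - 2 * c) * (cnt Pos Neg x y - cnt Neg Pos x y) = 0"
    by (simp add: algebra_simps)
  moreover have "1 - 2 * c \<noteq> 0" by presburger
  ultimately show ?thesis by simp
qed


definition NA where "NA x y \<longleftrightarrow> y \<noteq> x \<and> \<not> E x y"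

lemma NA_split: "x \<in> V \<Longrightarrow> ob (NA x y) = 1 - ob (x = y) - ob (Pos x y) - ob (Neg x y)"
  using irr spm by (auto simp: NA_def Pos_def Neg_def)

lemma rowNA: "x \<in> V \<Longrightarrow> (\<Sum>y\<in>V. ob (NA x y)) = int (card V) - 6"
proof -
  assume x: "x \<in> V"
  have "(\<Sum>y\<in>V. ob (NA x y)) = (\<Sum>y\<in>V. 1 - ob (x = y) - ob (Pos x y) - ob (Neg x y))"
    by (rule sum.cong) (auto simp: NA_split x)
  also have "\<dots> = int (card V) - (\<Sum>y\<in>V. ob (x = y)) - (\<Sum>y\<in>V. ob (Pos x y)) - (\<Sum>y\<in>V. ob (Neg x y))"
    by (simp only: sum_subtractf) simp
  finally show ?thesis using rowI[OF x] rowP[OF x] rowM[OF x] by simp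
qed

lemma cnt_nonneg: "cnt R T x y \<ge> 0" unfolding cnt_def by (rule sum_nonneg) simp

lemma cnt_card: "cnt R T x y = int (card {w\<in>V. R x w \<and> T w y})"
  unfolding cnt_def using fin by (simp add: Int_def Collect_conj_eq[symmetric])

lemma cnt0: "cnt R T x y \<le> 0 \<Longrightarrow> w \<in> V \<Longrightarrow> R x w \<Longrightarrow> T w y \<Longrightarrow> False"
  using fin by (auto simp: cnt_card)

lemma cnt1: "cnt R T x y \<ge> 1 \<Longrightarrow> \<exists>w\<in>V. R x w \<and> T w y"
proof (rule ccontr)
  assume a: "cnt R T x y \<ge> 1" "\<not> (\<exists>w\<in>V. R x w \<and> T w y)"
  hence e: "{w\<in>V. R x w \<and> T w y} = {}" by auto
  from a(1) show False unfolding cnt_card e by simp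
qed

lemma cnt_le1: "cnt R T x y \<le> 1 \<Longrightarrow> w1 \<in> V \<Longrightarrow> R x w1 \<Longrightarrow> T w1 y \<Longrightarrow>
   w2 \<in> V \<Longrightarrow> R x w2 \<Longrightarrow> T w2 y \<Longrightarrow> w1 = w2"
proof (rule ccontr)
  assume a: "cnt R T x y \<le> 1" "w1 \<in> V" "R x w1" "T w1 y" "w2 \<in> V" "R x w2" "T w2 y" "w1 \<noteq> w2"
  have "{w1, w2} \<subseteq> {w\<in>V. R x w \<and> T w y}" using a by auto
  hence "card {w1, w2} \<le> card {w\<in>V. R x w \<and> T w y}" by (rule card_mono[rotated]) (use fin in simp)
  thus False using a by (simp add: cnt_card)
qed

lemma E1: "x \<in> V \<Longrightarrow> y \<in> V \<Longrightarrow> adj_sq V E \<sigma> x y = cnt Pos Pos x y + cnt Neg Neg x y - 2 * cnt Pos Neg x y"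
  using sq_eq comm by simp

lemma E2: "x \<in> V \<Longrightarrow> y \<in> V \<Longrightarrow> cnt Pos Pos x y + cnt Neg Neg x y + 2 * cnt Pos Neg x y \<le> 5"
proof -
  assume x: "x \<in> V" and y: "y \<in> V"
  have pw: "ob (Pos x w \<and> Pos w y) + ob (Neg x w \<and> Neg w y) + ob (Pos x w \<and> Neg w y) + ob (Neg x w \<and> Pos w y)
     \<le> ob (Pos x w) + ob (Neg x w)" for w
    using PN[of x w] PN[of w y] by (cases "Pos x w"; cases "Neg x w"; cases "Pos w y"; cases "Neg w y") auto
  from pw have "(\<Sum>w\<in>V. ob (Pos x w \<and> Pos w y) + ob (Neg x w \<and> Neg w y) + ob (Pos x w \<and> Neg w y) + ob (Neg x w \<and> Pos w y))
     \<le> (\<Sum>w\<in>V. ob (Pos x w) + ob (Neg x w))" by (intro sum_mono)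
  hence "cnt Pos Pos x y + cnt Neg Neg x y + cnt Pos Neg x y + cnt Neg Pos x y \<le> 5"
    using rowP[OF x] rowM[OF x] by (simp only: sum.distrib cnt_def)
  thus ?thesis using comm[OF x y] by linarith
qed


lemma rowE: "x \<in> V \<Longrightarrow> (\<Sum>w\<in>V. ob (E x w)) = 5"
proof -
  assume x: "x \<in> V"
  have "(\<Sum>w\<in>V. ob (E x w)) = (\<Sum>w\<in>V. ob (Pos x w) + ob (Neg x w))"
    by (rule sum.cong) (use PN Esplit in \<open>fastforce\<close>)+
  thus ?thesis using rowP[OF x] rowM[OF x] by (simp only: sum.distrib)
qed

lemma colE: "y \<in> V \<Longrightarrow> (\<Sum>w\<in>V. ob (E w y)) = 5"
proof -
  assume y: "y \<in> V"
  have "(\<Sum>w\<in>V. ob (E w y)) = (\<Sum>w\<in>V. ob (E y w))"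
  proof (rule sum.cong)
    fix w have "E w y = E y w" using sym by blast
    thus "ob (E w y) = ob (E y w)" by simp
  qed simp
  thus ?thesis using rowE[OF y] by simp
qed

lemma E3: "x \<in> V \<Longrightarrow> y \<in> V \<Longrightarrow> x \<noteq> y \<Longrightarrow>
   10 \<le> int (card V) - 2 + cnt Pos Pos x y + cnt Neg Neg x y + 2 * cnt Pos Neg x y + 2 * ob (E x y)"
proof -
  assume x: "x \<in> V" and y: "y \<in> V" and xy: "x \<noteq> y"
  define f where "f w = (1 - ob (w = x) - ob (w = y)) + (ob (Pos x w \<and> Pos w y) + ob (Neg x w \<and> Neg w y)
     + ob (Pos x w \<and> Neg w y) + ob (Neg x w \<and> Pos w y)) + ob (E x y) * (ob (w = x) + ob (w = y))" for w
  have "ob (E x w) + ob (E w y) \<le> f w" for w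
    unfolding f_def using PN irr xy by (auto simp: Esplit)
  hence "(\<Sum>w\<in>V. ob (E x w) + ob (E w y)) \<le> (\<Sum>w\<in>V. f w)"
    by (intro sum_mono) auto
  also have "(\<Sum>w\<in>V. f w) = int (card V) - (\<Sum>w\<in>V. ob (w = x)) - (\<Sum>w\<in>V. ob (w = y)) + (cnt Pos Pos x y + cnt Neg Neg x y
     + cnt Pos Neg x y + cnt Neg Pos x y) + ob (E x y) * ((\<Sum>w\<in>V. ob (w = x)) + (\<Sum>w\<in>V. ob (w = y)))"
    unfolding f_def cnt_def by (simp only: sum.distrib sum_subtractf sum_distrib_left[symmetric] sum_constant)
  finally have "(\<Sum>w\<in>V. ob (E x w)) + (\<Sum>w\<in>V. ob (E w y)) \<le> int (card V) - (\<Sum>w\<in>V. ob (w = x)) - (\<Sum>w\<in>V. ob (w = y)) + (cnt Pos Pos x y + cnt Neg Neg x y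
     + cnt Pos Neg x y + cnt Neg Pos x y) + ob (E x y) * ((\<Sum>w\<in>V. ob (w = x)) + (\<Sum>w\<in>V. ob (w = y)))"
    by (simp only: sum.distrib)
  moreover have "(\<Sum>w\<in>V. ob (w = x)) = 1" using fin x by simp
  moreover have "(\<Sum>w\<in>V. ob (w = y)) = 1" using fin y by simp
  ultimately show ?thesis using rowE[OF x] colE[OF y] comm[OF x y] by simp
qed

lemma E4: "x \<in> V \<Longrightarrow> (\<Sum>y\<in>V. cnt Pos Neg x y) = 6"
proof -
  assume x: "x \<in> V"
  have "(\<Sum>y\<in>V. cnt Pos Neg x y) = (\<Sum>w\<in>V. \<Sum>y\<in>V. ob (Pos x w) * ob (Neg w y))"
    unfolding cnt_def by (subst sum.swap) (simp only: of_bool_conj)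
  also have "\<dots> = (\<Sum>w\<in>V. ob (Pos x w) * 2)"
    by (rule sum.cong) (auto simp: sum_distrib_left[symmetric] rowM simp del: sum_of_bool_mult_eq sum_of_bool_eq)
  also have "\<dots> = 6" using rowP[OF x] by (simp add: sum_distrib_right[symmetric] del: sum_of_bool_mult_eq sum_of_bool_eq)
  finally show ?thesis .
qed

lemma Ediag: "x \<in> V \<Longrightarrow> cnt Pos Neg x x = 0"
  unfolding cnt_def by (rule sum.neutral) (use Nsym PN in auto)


lemma P3: "x \<in> V \<Longrightarrow> \<exists>p q s. {w\<in>V. Pos x w} = {p, q, s} \<and> p \<noteq> q \<and> q \<noteq> s \<and> p \<noteq> s"
  using dP[of x] by (simp add: Pos_def card_3_iff)

lemma M2: "x \<in> V \<Longrightarrow> card {w\<in>V. Neg x w} = 2"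
  using dM[of x] by (simp add: Neg_def)

lemma sqNA: "x \<in> V \<Longrightarrow> y \<in> V \<Longrightarrow> NA x y \<Longrightarrow> adj_sq V E \<sigma> x y = c"
  using sq by (auto simp: NA_def)
lemma sqP: "Pos x y \<Longrightarrow> adj_sq V E \<sigma> x y = 0"
  using sq PV irr by (auto simp: Pos_def)
lemma sqN: "Neg x y \<Longrightarrow> adj_sq V E \<sigma> x y = 1"
  using sq NV irr by (auto simp: Neg_def)

context
  assumes cm1: "c = -1" and PMeq: "\<And>x y. x \<in> V \<Longrightarrow> y \<in> V \<Longrightarrow> cnt Pos Neg x y = ob (NA x y)"
begin

lemma Fpos: "Pos x y \<Longrightarrow> E x w \<Longrightarrow> E w y \<Longrightarrow> False"
proof -
  assume a: "Pos x y" "E x w" "E w y"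
  have x: "x \<in> V" and y: "y \<in> V" and w: "w \<in> V" using a PV inV by auto
  have "\<not> NA x y" using a PosE by (auto simp: NA_def)
  hence pm: "cnt Pos Neg x y \<le> 0" "cnt Neg Pos x y \<le> 0" using PMeq[OF x y] comm[OF x y] by auto
  have "cnt Pos Pos x y + cnt Neg Neg x y - 2 * cnt Pos Neg x y = 0" using E1[OF x y] sqP[OF a(1)] by simp
  hence "cnt Pos Pos x y \<le> 0" "cnt Neg Neg x y \<le> 0" using pm cnt_nonneg[of Pos Pos x y] cnt_nonneg[of Neg Neg x y] by auto
  moreover have "Pos x w \<or> Neg x w" "Pos w y \<or> Neg w y" using a Esplit by auto
  ultimately show False using cnt0[of Pos Pos x y w] cnt0[of Neg Neg x y w] cnt0[of Pos Neg x y w]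
      cnt0[of Neg Pos x y w] pm w by blast
qed

lemma FnegMM: "Neg x y \<Longrightarrow> \<exists>w\<in>V. Neg x w \<and> Neg w y"
proof -
  assume a: "Neg x y"
  have x: "x \<in> V" and y: "y \<in> V" using a NV by auto
  have "\<not> NA x y" using a NegE by (auto simp: NA_def)
  hence pm: "cnt Pos Neg x y = 0" using PMeq[OF x y] by auto
  have s: "cnt Pos Pos x y + cnt Neg Neg x y = 1" using E1[OF x y] sqN[OF a] pm by simp
  have "cnt Pos Pos x y \<le> 0"
  proof (rule ccontr)
    assume "\<not> cnt Pos Pos x y \<le> 0"
    then obtain w where "w \<in> V" "Pos x w" "Pos w y" using cnt1[of Pos Pos x y] by auto
    thus False using Fpos[of x w y] a NegE PosE sym by blast
  qed
  hence "cnt Neg Neg x y \<ge> 1" using s by simp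
  thus ?thesis by (rule cnt1)
qed

lemma FC: "Neg x a \<Longrightarrow> Neg x b \<Longrightarrow> a \<noteq> b \<Longrightarrow> Neg a b"
proof -
  assume a: "Neg x a" "Neg x b" "a \<noteq> b"
  obtain w where w: "w \<in> V" "Neg x w" "Neg w a" using FnegMM[OF a(1)] by blast
  have "w = b"
  proof (rule ccontr)
    assume "w \<noteq> b"
    moreover have "w \<noteq> a" using w Nirr by auto
    ultimately have "card {a, b, w} = 3" using a by auto
    moreover have "{a, b, w} \<subseteq> {w\<in>V. Neg x w}" using a w NV by auto
    hence "card {a, b, w} \<le> card {w\<in>V. Neg x w}" by (rule card_mono[rotated]) (use fin in simp)
    moreover have "x \<in> V" using a NV by blast
    ultimately show False using M2 \<open>card {a, b, w} = 3\<close> by simp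
  qed
  thus ?thesis using w Nsym by auto
qed

lemma Fnon: "x \<in> V \<Longrightarrow> y \<in> V \<Longrightarrow> x \<noteq> y \<Longrightarrow> \<not> E x y \<Longrightarrow>
   (\<exists>w\<in>V. Pos x w \<and> Neg w y) \<and> cnt Pos Pos x y = 1"
proof -
  assume x: "x \<in> V" and y: "y \<in> V" and xy: "x \<noteq> y" and ne: "\<not> E x y"
  have na: "NA x y" using xy ne by (auto simp: NA_def)
  hence pm: "cnt Pos Neg x y = 1" using PMeq[OF x y] by simp
  have s: "cnt Pos Pos x y + cnt Neg Neg x y = 1" using E1[OF x y] sqNA[OF x y na] pm cm1 by simp
  have "cnt Neg Neg x y \<le> 0"
  proof (rule ccontr)
    assume "\<not> cnt Neg Neg x y \<le> 0"
    then obtain w where "w \<in> V" "Neg x w" "Neg w y" using cnt1[of Neg Neg x y] by auto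
    thus False using FC[of w x y] xy ne Nsym NegE by blast
  qed
  hence "cnt Pos Pos x y = 1" using s cnt_nonneg[of Neg Neg x y] by simp
  moreover have "\<exists>w\<in>V. Pos x w \<and> Neg w y" using pm by (intro cnt1) simp
  ultimately show ?thesis by simp
qed


lemma Funiq: "x \<in> V \<Longrightarrow> y \<in> V \<Longrightarrow> x \<noteq> y \<Longrightarrow> \<not> E x y \<Longrightarrow>
   Pos x w1 \<Longrightarrow> Pos w1 y \<Longrightarrow> Pos x w2 \<Longrightarrow> Pos w2 y \<Longrightarrow> w1 = w2"
  using Fnon[of x y] cnt_le1[of Pos Pos x y w1 w2] PV by auto

lemma Fnon2: "x \<in> V \<Longrightarrow> y \<in> V \<Longrightarrow> x \<noteq> y \<Longrightarrow> \<not> E x y \<Longrightarrow> \<exists>w. Pos x w \<and> Pos w y"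
  using Fnon[of x y] cnt1[of Pos Pos x y] by auto

lemma final: False
proof -
  obtain i where i: "i \<in> V" using nonadj by blast
  obtain p q s where Pi: "{w\<in>V. Pos i w} = {p, q, s}" and d: "p \<noteq> q" "q \<noteq> s" "p \<noteq> s"
    using P3[OF i] by blast
  have Pi': "Pos i z \<longleftrightarrow> z = p \<or> z = q \<or> z = s" for z
    using Pi PV by (auto simp: set_eq_iff)
  have ip: "Pos i p" using Pi' by simp
  have p: "p \<in> V" using ip PV by auto
  obtain a1 a2 a3 where Pp: "{w\<in>V. Pos p w} = {a1, a2, a3}" and d2: "a1 \<noteq> a2" "a2 \<noteq> a3" "a1 \<noteq> a3"
    using P3[OF p] by blast
  have Pp': "Pos p z \<longleftrightarrow> z = a1 \<or> z = a2 \<or> z = a3" for z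
    using Pp PV by (auto simp: set_eq_iff)
  have "Pos p i" using ip Psym by auto
  hence "i = a1 \<or> i = a2 \<or> i = a3" using Pp' by blast
  hence "\<exists>v w. v \<noteq> w \<and> v \<noteq> i \<and> w \<noteq> i \<and> (\<forall>z. Pos p z \<longleftrightarrow> z = i \<or> z = v \<or> z = w)"
  proof (elim disjE)
    assume "i = a1" thus ?thesis using Pp' d2 by (intro exI[of _ a2] exI[of _ a3]) auto
  next
    assume "i = a2" thus ?thesis using Pp' d2 by (intro exI[of _ a1] exI[of _ a3]) auto
  next
    assume "i = a3" thus ?thesis using Pp' d2 by (intro exI[of _ a1] exI[of _ a2]) auto
  qed
  then obtain v w where vw: "v \<noteq> w" "v \<noteq> i" "w \<noteq> i" and Pp2: "\<And>z. Pos p z \<longleftrightarrow> z = i \<or> z = v \<or> z = w"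
    by blast
  have pv: "Pos p v" and pw: "Pos p w" using Pp2 by auto
  have v: "v \<in> V" and w: "w \<in> V" using pv pw PV by auto
  have niv: "\<not> E i v" using Fpos[of i p v] ip pv PosE sym by blast
  have niw: "\<not> E i w" using Fpos[of i p w] ip pw PosE sym by blast
  have nvw: "\<not> E v w" using Fpos[of p v w] pv pw PosE sym by blast
  obtain x where x: "Pos i x" "Neg x v" using Fnon[OF i v vw(2)[symmetric] niv] by blast
  obtain y where y: "Pos i y" "Neg y w" using Fnon[OF i w vw(3)[symmetric] niw] by blast
  have xp: "x \<noteq> p" using x pv PN by blast
  have yp: "y \<noteq> p" using y pw PN by blast
  have xy: "x \<noteq> y" using FC[of x v w] x y vw nvw NegE by blast
  obtain r where r: "Pos v r" "Neg r w" using Fnon[OF v w vw(1) nvw] by blast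
  have ry: "r \<noteq> y"
  proof
    assume "r = y"
    hence "Pos v y" "Pos y i" using r y Psym by auto
    moreover have "Pos v p" "Pos p i" using pv ip Psym by auto
    ultimately have "y = p" using Funiq[of v i y p] v i vw niv sym by blast
    thus False using yp by simp
  qed
  have nry: "Neg r y" using FC[of w r y] r y Nsym ry by blast
  have ri: "r \<noteq> i" using nry y PN by blast
  have r: "r \<in> V" "Pos v r" "Neg r w" using r PV by auto
  have nir: "\<not> E i r" using Fpos[of i y r] y nry NegE sym by blast
  obtain t where t: "Pos i t" "Pos t r" using Fnon2[OF i r(1) ri[symmetric] nir] by blast
  have ty: "t \<noteq> y" using t nry Nsym PN by blast
  have tp: "t \<noteq> p"
  proof
    assume "t = p"
    hence "r = i \<or> r = v \<or> r = w" using t Pp2 by auto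
    thus False using ri r Pirr Nirr by blast
  qed
  have tx: "t = x" using Pi'[of t] Pi'[of x] Pi'[of y] t(1) x(1) y(1) ty tp xp yp xy by auto
  show False using Fpos[of x r v] t tx x PosE NegE sym r by blast
qed

end

lemma dvd_cases: "(c::int) * d = -6 \<Longrightarrow> d \<ge> 1 \<Longrightarrow> (c = -6 \<and> d = 1) \<or> (c = -3 \<and> d = 2) \<or> (c = -2 \<and> d = 3) \<or> (c = -1 \<and> d = 6)"
proof -
  assume a: "c * d = -6" "d \<ge> 1"
  have "c \<le> -1"
  proof (rule ccontr)
    assume "\<not> c \<le> -1" hence "c \<ge> 0" by simp
    hence "c * d \<ge> 0" using a(2) by (intro mult_nonneg_nonneg) auto
    thus False using a by simp
  qed
  hence "d \<le> 6" using a by (smt (verit) mult_le_cancel_right1 mult_minus_left)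
  hence "d \<in> {1,2,3,4,5,6}" using a by auto
  thus ?thesis using a by (auto; presburger)
qed

lemma main: False
proof -
  obtain x0 y0 where x0: "x0 \<in> V" and y0: "y0 \<in> V" and na0: "NA x0 y0"
    using nonadj by (auto simp: NA_def)
  have "ob (NA x0 y0) \<le> (\<Sum>y\<in>V. ob (NA x0 y))"
    by (rule member_le_sum) (use fin y0 in auto)
  hence d1: "int (card V) - 6 \<ge> 1" using rowNA[OF x0] na0 by simp
  have xy0: "x0 \<noteq> y0" "\<not> E x0 y0" using na0 by (auto simp: NA_def)
  have E10: "cnt Pos Pos x0 y0 + cnt Neg Neg x0 y0 - 2 * cnt Pos Neg x0 y0 = c"
    using E1[OF x0 y0] sqNA[OF x0 y0 na0] by simp
  have E20: "cnt Pos Pos x0 y0 + cnt Neg Neg x0 y0 + 2 * cnt Pos Neg x0 y0 \<le> 5" using E2[OF x0 y0] .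
  have E30: "10 \<le> int (card V) - 2 + cnt Pos Pos x0 y0 + cnt Neg Neg x0 y0 + 2 * cnt Pos Neg x0 y0"
    using E3[OF x0 y0 xy0(1)] xy0(2) by simp
  have nn: "cnt Pos Pos x0 y0 \<ge> 0" "cnt Neg Neg x0 y0 \<ge> 0" "cnt Pos Neg x0 y0 \<ge> 0" by (rule cnt_nonneg)+
  from dvd_cases[OF key1 d1] show False
  proof (elim disjE conjE)
    assume "c = -6" "int (card V) - 6 = 1"
    thus False using E10 E20 nn by linarith
  next
    assume "c = -2" "int (card V) - 6 = 3"
    thus False using E10 E20 E30 nn by presburger
  next
    assume c3: "c = -3" and n8: "int (card V) - 6 = 2"
    have "2 * ob (NA x0 y) + ob (Pos x0 y) \<le> cnt Pos Neg x0 y" if y: "y \<in> V" for y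
    proof -
      have E2': "cnt Pos Pos x0 y + cnt Neg Neg x0 y + 2 * cnt Pos Neg x0 y \<le> 5" using E2[OF x0 y] .
      have nn': "cnt Pos Pos x0 y \<ge> 0" "cnt Neg Neg x0 y \<ge> 0" "cnt Pos Neg x0 y \<ge> 0" by (rule cnt_nonneg)+
      show ?thesis
      proof (cases "NA x0 y")
        case True
        hence "x0 \<noteq> y" "\<not> E x0 y" "\<not> Pos x0 y" by (auto simp: NA_def dest: PosE)
        moreover have "cnt Pos Pos x0 y + cnt Neg Neg x0 y - 2 * cnt Pos Neg x0 y = -3"
          using E1[OF x0 y] sqNA[OF x0 y True] c3 by simp
        moreover note E3[OF x0 y]
        ultimately show ?thesis using True E2' nn' n8 by (simp; presburger?)
      next
        case False
        show ?thesis
        proof (cases "Pos x0 y")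
          case True
          hence "x0 \<noteq> y" using Pirr by auto
          moreover have "cnt Pos Pos x0 y + cnt Neg Neg x0 y - 2 * cnt Pos Neg x0 y = 0"
            using E1[OF x0 y] sqP[OF True] by simp
          moreover note E3[OF x0 y]
          ultimately show ?thesis using True False E2' nn' n8 PosE[OF True] by (simp; presburger?)
        next
          case False
          thus ?thesis using \<open>\<not> NA x0 y\<close> nn' by simp
        qed
      qed
    qed
    hence "(\<Sum>y\<in>V. 2 * ob (NA x0 y) + ob (Pos x0 y)) \<le> (\<Sum>y\<in>V. cnt Pos Neg x0 y)"
      by (intro sum_mono) auto
    hence "2 * (\<Sum>y\<in>V. ob (NA x0 y)) + (\<Sum>y\<in>V. ob (Pos x0 y)) \<le> 6"
      using E4[OF x0] by (simp only: sum.distrib sum_distrib_left[symmetric])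
    thus False using rowNA[OF x0] rowP[OF x0] n8 by simp
  next
    assume c1: "c = -1" and n12: "int (card V) - 6 = 6"
    have PMeq: "cnt Pos Neg x y = ob (NA x y)" if x: "x \<in> V" and y: "y \<in> V" for x y
    proof -
      have ge: "ob (NA x z) \<le> cnt Pos Neg x z" if z: "z \<in> V" for z
      proof (cases "NA x z")
        case True
        have "cnt Pos Pos x z + cnt Neg Neg x z - 2 * cnt Pos Neg x z = -1"
          using E1[OF x z] sqNA[OF x z True] c1 by simp
        thus ?thesis using True cnt_nonneg[of Pos Pos x z] cnt_nonneg[of Neg Neg x z] by simp
      next
        case False thus ?thesis using cnt_nonneg[of Pos Neg x z] by simp
      qed
      have "(\<Sum>z\<in>V. cnt Pos Neg x z - ob (NA x z)) = 0"
        using E4[OF x] rowNA[OF x] n12 by (simp add: sum_subtractf)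
      hence "\<forall>z\<in>V. cnt Pos Neg x z - ob (NA x z) = 0"
        using sum_nonneg_eq_0_iff[of V "\<lambda>z. cnt Pos Neg x z - ob (NA x z)"] fin ge by auto
      thus ?thesis using y by auto
    qed
    show False by (rule final[OF c1 PMeq])
  qed
qed

end

theorem lemma3p9:
  fixes V :: "'a set" and E :: "'a \<Rightarrow> 'a \<Rightarrow> bool" and \<sigma> :: "'a \<Rightarrow> 'a \<Rightarrow> int"
    and n :: nat and a b c :: int
  assumes "srsg V E \<sigma> n 5 a b c"
    and "class_C1 V E a b c \<or> class_C4 V E a b c \<or> class_C5 V E a b c"
    and "connected_graph V E"
    and "\<not> complete_graph V E"
    and "regular V E 5"
    and "net_regular V E \<sigma> 1"
  shows "(a, b) \<noteq> (0, 1)"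
proof
  assume ab: "(a, b) = (0, 1)"
  hence a0: "a = 0" and b1: "b = 1" by auto
  have sg: "signed_graph V E \<sigma>" using assms(1) by (simp add: srsg_def)
  hence fin: "finite V" and inV: "\<And>u v. E u v \<Longrightarrow> u \<in> V \<and> v \<in> V"
    and irr: "\<And>u. \<not> E u u" and sym: "\<And>u v. E u v \<Longrightarrow> E v u"
    and ssym: "\<And>u v. E u v \<Longrightarrow> \<sigma> u v = \<sigma> v u"
    and spm: "\<And>u v. E u v \<Longrightarrow> \<sigma> u v = 1 \<or> \<sigma> u v = -1"
    by (auto simp: signed_graph_def)
  have deg: "\<And>v. v \<in> V \<Longrightarrow> card {w\<in>V. E v w \<and> \<sigma> v w = 1} = 3 \<and> card {w\<in>V. E v w \<and> \<sigma> v w = -1} = 2"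
  proof -
    fix v assume v: "v \<in> V"
    have "{w\<in>V. E v w} = {w\<in>V. E v w \<and> \<sigma> v w = 1} \<union> {w\<in>V. E v w \<and> \<sigma> v w = -1}"
      using spm by auto
    moreover have "card ({w\<in>V. E v w \<and> \<sigma> v w = 1} \<union> {w\<in>V. E v w \<and> \<sigma> v w = -1})
       = card {w\<in>V. E v w \<and> \<sigma> v w = 1} + card {w\<in>V. E v w \<and> \<sigma> v w = -1}"
      by (rule card_Un_disjoint) (use fin in auto)
    ultimately have "card {w\<in>V. E v w} = card {w\<in>V. E v w \<and> \<sigma> v w = 1} + card {w\<in>V. E v w \<and> \<sigma> v w = -1}"
      by simp
    moreover have "card {w\<in>V. E v w} = 5" using assms(5) v by (simp add: regular_def degree_def)
    moreover have "int (card {w\<in>V. E v w \<and> \<sigma> v w = 1}) - int (card {w\<in>V. E v w \<and> \<sigma> v w = -1}) = 1"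
      using assms(6) v by (simp add: net_regular_def pos_degree_def neg_degree_def)
    ultimately show "card {w\<in>V. E v w \<and> \<sigma> v w = 1} = 3 \<and> card {w\<in>V. E v w \<and> \<sigma> v w = -1} = 2" by linarith
  qed
  have sq: "\<And>i j. i \<in> V \<Longrightarrow> j \<in> V \<Longrightarrow> adj_sq V E \<sigma> i j =
        (if i = j then 5 else if E i j then (if \<sigma> i j = 1 then 0 else 1) else c)"
  proof -
    fix i j assume i: "i \<in> V" and j: "j \<in> V"
    show "adj_sq V E \<sigma> i j = (if i = j then 5 else if E i j then (if \<sigma> i j = 1 then 0 else 1) else c)"
    proof (cases "i = j")
      case True thus ?thesis using assms(1) i unfolding srsg_def by simp
    next
      case False
      show ?thesis
      proof (cases "E i j")
        case True
        thus ?thesis using assms(1) i j a0 b1 spm[OF True] \<open>i \<noteq> j\<close> unfolding srsg_def by auto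
      next
        case False thus ?thesis using assms(1) i j \<open>i \<noteq> j\<close> unfolding srsg_def by auto
      qed
    qed
  qed
  have nonadj: "\<exists>i\<in>V. \<exists>j\<in>V. i \<noteq> j \<and> \<not> E i j" using assms(4) by (auto simp: complete_graph_def)
  interpret S V E \<sigma> c
    by (unfold_locales) (use fin inV irr sym ssym spm deg sq nonadj in \<open>auto\<close>)
  show False by (rule main)
qed

end
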